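(* In the public goods model with $k\ge n$, for any $\alpha\in(0,1]$, any allocation that satisfies $\alpha$-Prop satisfies $\frac{\alpha}{n}$-RRS. This is tight: there is an instance with $n=2$ agents and an allocation satisfying Prop ($\alpha=1$) under which some agent $i$ receives exactly $\frac1n\mathrm{RRS}_i>0$.
   Context: Public goods model: agents $[n]$, goods $G=[m]$, integer $0\le k\le m$, nonnegative integer additive values $v_{ij}$, $v_i(S)=\sum_{j\in S}v_{ij}$; an allocation is $x\subseteq G$ with $|x|\le k$. $\mathrm{Prop}_i=\frac1n\max_{|y|\le k}v_i(y)$, $\mathrm{RRS}_i=\max_{|y|\le\lfloor k/n\rfloor}v_i(y)$. $x$ is $\beta$-Prop if $v_i(x)\ge\beta\,\mathrm{Prop}_i$ for all $i$, and $\beta$-RRS if $v_i(x)\ge\beta\,\mathrm{RRS}_i$ for all $i$. *)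

theory Defs
  imports Complex_Main
begin

definition val :: "(nat \<Rightarrow> nat \<Rightarrow> nat) \<Rightarrow> nat \<Rightarrow> nat set \<Rightarrow> nat" where
  "val v i S = (\<Sum>j\<in>S. v i j)"

definition is_alloc :: "nat \<Rightarrow> nat \<Rightarrow> nat set \<Rightarrow> bool" where
  "is_alloc m k x \<longleftrightarrow> x \<subseteq> {0..<m} \<and> card x \<le> k"

definition Prop :: "nat \<Rightarrow> nat \<Rightarrow> nat \<Rightarrow> (nat \<Rightarrow> nat \<Rightarrow> nat) \<Rightarrow> nat \<Rightarrow> real" where
  "Prop n m k v i = (1 / real n) * real (Max {val v i y | y. y \<subseteq> {0..<m} \<and> card y \<le> k})"

definition RRS :: "nat \<Rightarrow> nat \<Rightarrow> nat \<Rightarrow> (nat \<Rightarrow> nat \<Rightarrow> nat) \<Rightarrow> nat \<Rightarrow> real" where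
  "RRS n m k v i = real (Max {val v i y | y. y \<subseteq> {0..<m} \<and> card y \<le> k div n})"

definition is_beta_Prop :: "nat \<Rightarrow> nat \<Rightarrow> nat \<Rightarrow> (nat \<Rightarrow> nat \<Rightarrow> nat) \<Rightarrow> real \<Rightarrow> nat set \<Rightarrow> bool" where
  "is_beta_Prop n m k v \<beta> x \<longleftrightarrow> (\<forall>i<n. real (val v i x) \<ge> \<beta> * Prop n m k v i)"

definition is_beta_RRS :: "nat \<Rightarrow> nat \<Rightarrow> nat \<Rightarrow> (nat \<Rightarrow> nat \<Rightarrow> nat) \<Rightarrow> real \<Rightarrow> nat set \<Rightarrow> bool" where
  "is_beta_RRS n m k v \<beta> x \<longleftrightarrow> (\<forall>i<n. real (val v i x) \<ge> \<beta> * RRS n m k v i)"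

end

theory Submission
  imports Defs
begin

lemma fin_vals: "finite {val v i y | y. y \<subseteq> {0..<m} \<and> card y \<le> k}"
proof -
  have "{val v i y | y. y \<subseteq> {0..<m} \<and> card y \<le> k} \<subseteq> (val v i) ` Pow {0..<m}" by auto
  then show ?thesis by (rule finite_subset) simp
qed

lemma rrs_le: assumes "0 < n" shows "RRS n m k v i \<le> real n * Prop n m k v i"
proof -
  have ne: "{val v i y | y. y \<subseteq> {0..<m} \<and> card y \<le> k div n} \<noteq> {}" by force
  have sub: "{val v i y | y. y \<subseteq> {0..<m} \<and> card y \<le> k div n} \<subseteq> {val v i y | y. y \<subseteq> {0..<m} \<and> card y \<le> k}"
    using div_le_dividend le_trans by blast
  have "Max {val v i y | y. y \<subseteq> {0..<m} \<and> card y \<le> k div n} \<le> Max {val v i y | y. y \<subseteq> {0..<m} \<and> card y \<le> k}"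
    by (rule Max_mono[OF sub ne fin_vals])
  then show ?thesis using assms unfolding RRS_def Prop_def by simp
qed

lemma part1: "0 < n \<Longrightarrow> 0 < \<alpha> \<Longrightarrow> is_beta_Prop n m k v \<alpha> x \<Longrightarrow> is_beta_RRS n m k v (\<alpha> / real n) x"
  unfolding is_beta_Prop_def is_beta_RRS_def
proof (intro allI impI)
  fix i assume n: "0 < n" and a: "0 < \<alpha>" and h: "\<forall>i<n. \<alpha> * Prop n m k v i \<le> real (val v i x)" and i: "i < n"
  have "\<alpha> / real n * RRS n m k v i \<le> \<alpha> / real n * (real n * Prop n m k v i)"
    using rrs_le[OF n] a n by (intro mult_left_mono) auto
  also have "\<dots> = \<alpha> * Prop n m k v i" using n by simp
  finally show "\<alpha> / real n * RRS n m k v i \<le> real (val v i x)" using h i order_trans by blast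
qed

definition vex :: "nat \<Rightarrow> nat \<Rightarrow> nat" where "vex i j = (if i = 0 \<and> j < 2 then 1 else 0)"

lemma vex_bound: "y \<subseteq> {0..<4} \<Longrightarrow> val vex i y \<le> val vex i {0..<4}"
  unfolding val_def by (rule sum_mono2) auto

lemma vex_full: "val vex i {0..<4} = (if i = 0 then 2 else 0)"
  by (simp add: val_def vex_def numeral_eq_Suc)

lemma vex_01: "val vex 0 {0,1} = 2"
  by (simp add: val_def vex_def)

lemma max_c: assumes "2 \<le> c" shows "Max {val vex i y | y. y \<subseteq> {0..<4} \<and> card y \<le> c} = val vex i {0..<4}"
proof (rule Max_eqI[OF fin_vals])
  show "\<And>z. z \<in> {val vex i y | y. y \<subseteq> {0..<(4::nat)} \<and> card y \<le> c} \<Longrightarrow> z \<le> val vex i {0..<4}"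
    using vex_bound by blast
  show "val vex i {0..<4} \<in> {val vex i y | y. y \<subseteq> {0..<(4::nat)} \<and> card y \<le> c}"
  proof (cases "i = 0")
    case True
    have "{0,1} \<subseteq> {0..<(4::nat)} \<and> card {0,1::nat} \<le> c" using assms by auto
    moreover have "val vex i {0..<4} = val vex i {0,1}" using True vex_01 vex_full by simp
    ultimately show ?thesis by blast
  next
    case False
    have "val vex i {} = val vex i {0..<4}" using False vex_full by (simp add: val_def)
    moreover have "{} \<subseteq> {0..<(4::nat)} \<and> card ({}::nat set) \<le> c" by simp
    ultimately show ?thesis by (metis (mono_tags, lifting) mem_Collect_eq)
  qed
qed

theorem lemma3:
  shows "(\<forall>(n::nat) (m::nat) (k::nat) v (\<alpha>::real) x.
            0 < n \<longrightarrow> n \<le> k \<longrightarrow> k \<le> m \<longrightarrow> 0 < \<alpha> \<longrightarrow> \<alpha> \<le> 1 \<longrightarrow>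
            is_alloc m k x \<longrightarrow> is_beta_Prop n m k v \<alpha> x \<longrightarrow>
            is_beta_RRS n m k v (\<alpha> / real n) x)
       \<and> (\<exists>(m::nat) (k::nat) v x i.
            2 \<le> k \<and> k \<le> m \<and> is_alloc m k x \<and> is_beta_Prop 2 m k v 1 x \<and> i < 2 \<and>
            RRS 2 m k v i > 0 \<and> real (val v i x) = RRS 2 m k v i / 2)"
proof
  show "\<forall>(n::nat) (m::nat) (k::nat) v (\<alpha>::real) x.
            0 < n \<longrightarrow> n \<le> k \<longrightarrow> k \<le> m \<longrightarrow> 0 < \<alpha> \<longrightarrow> \<alpha> \<le> 1 \<longrightarrow>
            is_alloc m k x \<longrightarrow> is_beta_Prop n m k v \<alpha> x \<longrightarrow>
            is_beta_RRS n m k v (\<alpha> / real n) x" using part1 by blast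
  have R: "RRS 2 4 4 vex i = (if i = 0 then 2 else 0)" for i
    unfolding RRS_def using max_c[of "4 div 2" i] vex_full by simp
  have P: "Prop 2 4 4 vex i = (if i = 0 then 1 else 0)" for i
    unfolding Prop_def using max_c[of 4 i] vex_full by simp
  have x: "val vex i {0} = (if i = 0 then 1 else 0)" for i by (simp add: val_def vex_def)
  have "2 \<le> (4::nat) \<and> 4 \<le> (4::nat) \<and> is_alloc 4 4 {0} \<and> is_beta_Prop 2 4 4 vex 1 {0} \<and> (0::nat) < 2 \<and>
            RRS 2 4 4 vex 0 > 0 \<and> real (val vex 0 {0}) = RRS 2 4 4 vex 0 / 2"
    using R P x by (auto simp: is_alloc_def is_beta_Prop_def)
  then show "\<exists>(m::nat) (k::nat) v x i.
            2 \<le> k \<and> k \<le> m \<and> is_alloc m k x \<and> is_beta_Prop 2 m k v 1 x \<and> i < 2 \<and>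
            RRS 2 m k v i > 0 \<and> real (val v i x) = RRS 2 m k v i / 2" by blast
qed

end
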